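(* For all integers $i,j,k,m\ge0$: if $\omega_i+\omega_j-\omega_m=0$, or $\omega_i-\omega_j+\omega_m=0$, or $-\omega_i+\omega_j+\omega_m=0$, then $\overline{\mathfrak{C}}_{ijm}=0$; and if $\omega_i+\omega_j+\omega_k-\omega_m=0$, or $\omega_i+\omega_j-\omega_k+\omega_m=0$, or $\omega_i-\omega_j+\omega_k+\omega_m=0$, or $-\omega_i+\omega_j+\omega_k+\omega_m=0$, then $\mathfrak{C}_{ijkm}=0$.
   Context: $\omega_n=n+2$. $\mathfrak{e}_n(x)=\mathfrak{N}_nP_n^{(3/2,3/2)}(\cos x)$ with $P_n^{(3/2,3/2)}$ the Jacobi polynomial and $\mathfrak{N}_n=\frac{\sqrt{\omega_n\Gamma(1+n)\Gamma(4+n)}}{2\sqrt2\,\Gamma(5/2+n)}$. $\overline{\mathfrak{C}}_{ijm}=\int_0^\pi\mathfrak{e}_i\mathfrak{e}_j\mathfrak{e}_m\sin^4x\,dx$, $\mathfrak{C}_{ijkm}=\int_0^\pi\mathfrak{e}_i\mathfrak{e}_j\mathfrak{e}_k\mathfrak{e}_m\sin^6x\,dx$. *)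

theory Defs
  imports "HOL-Analysis.Analysis"
begin

definition jacobiP :: "nat \<Rightarrow> real \<Rightarrow> real \<Rightarrow> real \<Rightarrow> real" where
  "jacobiP n a b x =
     (\<Sum>s\<le>n. ((real n + a) gchoose (n - s)) * ((real n + b) gchoose s)
              * ((x - 1) / 2) ^ s * ((x + 1) / 2) ^ (n - s))"

definition omega :: "nat \<Rightarrow> int" where
  "omega n = int n + 2"

definition normN :: "nat \<Rightarrow> real" where
  "normN n = sqrt (real_of_int (omega n) * Gamma (1 + real n) * Gamma (4 + real n))
             / (2 * sqrt 2 * Gamma (5/2 + real n))"

definition ee :: "nat \<Rightarrow> real \<Rightarrow> real" where
  "ee n x = normN n * jacobiP n (3/2) (3/2) (cos x)"

definition Cbar :: "nat \<Rightarrow> nat \<Rightarrow> nat \<Rightarrow> real" where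
  "Cbar i j m = integral {0..pi} (\<lambda>x. ee i x * ee j x * ee m x * sin x ^ 4)"

definition C4 :: "nat \<Rightarrow> nat \<Rightarrow> nat \<Rightarrow> nat \<Rightarrow> real" where
  "C4 i j k m = integral {0..pi} (\<lambda>x. ee i x * ee j x * ee k x * ee m x * sin x ^ 6)"

end

theory Submission
  imports Defs "HOL-Computational_Algebra.Polynomial"
begin


lemma fd_step:
  fixes f :: "nat \<Rightarrow> real"
  shows "(\<Sum>s\<le>Suc n. (-1)^s * real (Suc n choose s) * f s)
       = (\<Sum>s\<le>n. (-1)^s * real (n choose s) * (f s - f (Suc s)))"
proof -
  have e1: "(\<Sum>s\<le>n. (-1)^s * real (n choose s) * f s)
     = f 0 + (\<Sum>s\<le>n. (-1)^(Suc s) * real (n choose Suc s) * f (Suc s))"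
  proof -
    have "(\<Sum>s\<le>Suc n. (-1)^s * real (n choose s) * f s) = (\<Sum>s\<le>n. (-1)^s * real (n choose s) * f s)"
      by simp
    moreover have "(\<Sum>s\<le>Suc n. (-1)^s * real (n choose s) * f s) = f 0 + (\<Sum>s\<le>n. (-1)^(Suc s) * real (n choose Suc s) * f (Suc s))"
      by (subst sum.atMost_Suc_shift) simp
    moreover have "real (n choose Suc n) = 0" by simp
    ultimately show ?thesis by simp
  qed
  have "(\<Sum>s\<le>Suc n. (-1)^s * real (Suc n choose s) * f s)
     = f 0 + (\<Sum>s\<le>n. (-1)^(Suc s) * real (Suc n choose Suc s) * f (Suc s))"
    by (subst sum.atMost_Suc_shift) simp
  also have "\<dots> = f 0 + (\<Sum>s\<le>n. (-1)^(Suc s) * real (n choose Suc s) * f (Suc s))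
       + (\<Sum>s\<le>n. (-1)^(Suc s) * real (n choose s) * f (Suc s))"
    by (simp add: sum.distrib[symmetric] algebra_simps)
  also have "\<dots> = (\<Sum>s\<le>n. (-1)^s * real (n choose s) * (f s - f (Suc s)))"
    using e1 by (simp add: sum_subtractf algebra_simps sum_negf)
  finally show ?thesis .
qed

lemma degree_diff_shift:
  fixes p :: "real poly"
  assumes "degree p > 0"
  shows "degree (pcompose p [:1,1:] - p) < degree p"
proof -
  let ?q = "pcompose p [:1,1:] - p"
  have dc: "degree (pcompose p [:1,1:]) = degree p" by (simp add: degree_pcompose)
  have lc: "lead_coeff (pcompose p [:1,1:]) = lead_coeff p" by (simp add: lead_coeff_comp)
  have le: "degree ?q \<le> degree p" using dc by (intro degree_diff_le) auto
  have c0: "coeff ?q (degree p) = 0" using lc dc by simp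
  show ?thesis
  proof (cases "?q = 0")
    case True then show ?thesis using assms by simp
  next
    case False
    then have "coeff ?q (degree ?q) \<noteq> 0" by (simp only: leading_coeff_0_iff) simp
    then have "degree ?q \<noteq> degree p" using c0 by auto
    then show ?thesis using le by simp
  qed
qed

lemma fin_diff_poly:
  "\<And>p::real poly. degree p < n \<Longrightarrow> (\<Sum>s\<le>n. (-1)^s * real (n choose s) * poly p (real s)) = 0"
proof (induction n)
  case 0 then show ?case by simp
next
  case (Suc n p)
  let ?q = "pcompose p [:1,1:] - p"
  have pq: "poly p (real s) - poly p (real (Suc s)) = - poly ?q (real s)" for s
    by (simp add: poly_pcompose algebra_simps)
  have "(\<Sum>s\<le>Suc n. (-1)^s * real (Suc n choose s) * poly p (real s))
      = (\<Sum>s\<le>n. (-1)^s * real (n choose s) * (- poly ?q (real s)))"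
    by (subst fd_step) (simp only: pq)
  also have "\<dots> = - (\<Sum>s\<le>n. (-1)^s * real (n choose s) * poly ?q (real s))"
    by (simp add: sum_negf[symmetric] algebra_simps)
  also have "\<dots> = 0"
  proof (cases "degree p = 0")
    case True
    then obtain c where "p = [:c:]" by (metis degree_eq_zeroE)
    then have "?q = 0" by simp
    then show ?thesis by simp
  next
    case False
    then have "degree ?q < n" using degree_diff_shift[of p] Suc.prems by simp
    then show ?thesis using Suc.IH[of ?q] by (simp del: poly_diff)
  qed
  finally show ?case .
qed



definition wq :: "real \<Rightarrow> real" where "wq x = (1 - cos x) / 2"
definition vf :: "real \<Rightarrow> real" where "vf x = (1 + cos x) / 2"
definition Kint :: "nat \<Rightarrow> nat \<Rightarrow> real" where
  "Kint a b = integral {0..pi} (\<lambda>x. wq x ^ a * vf x ^ b)"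

lemma sin_sq_wv: "sin x ^ 2 = 4 * wq x * vf x"
  unfolding wq_def vf_def by (subst sin_squared_eq) (simp add: power2_eq_square field_simps)

lemma cont_wv: "continuous_on S (\<lambda>x. wq x ^ a * vf x ^ b)"
  unfolding wq_def vf_def by (intro continuous_intros) auto

lemma alg1: "(real a * w ^ (a - 1) * (s / 2)) * v ^ b * s
        + w ^ a * (real b * v ^ (b - 1) * (- s / 2)) * s
        + w ^ a * v ^ b * c
        = real a * w ^ (a - 1) * v ^ b * (s * s) / 2
          - real b * w ^ a * v ^ (b - 1) * (s * s) / 2
          + w ^ a * v ^ b * (c::real)"
  by (simp add: algebra_simps)
lemma alg2: "real a * w ^ (a - 1) * v ^ b * (4 * w * v) / 2
          - real b * w ^ a * v ^ (b - 1) * (4 * w * v) / 2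
          + w ^ a * v ^ b * (v - w) = 2 * v * v ^ b * (real a * w ^ (a - 1) * w)
          - 2 * w * w ^ a * (real b * v ^ (b - 1) * v)
          + w ^ a * v ^ b * (v - (w::real))"
  by (simp add: algebra_simps)

lemma Kint_rec: "(2 * real a + 1) * Kint a (Suc b) = (2 * real b + 1) * Kint (Suc a) b"
proof -
  define F where "F x = wq x ^ a * vf x ^ b * sin x" for x
  define G where "G x = (2 * real a + 1) * (wq x ^ a * vf x ^ Suc b) - (2 * real b + 1) * (wq x ^ Suc a * vf x ^ b)" for x
  have dw: "(wq has_real_derivative sin x / 2) (at x)" for x
    unfolding wq_def by (auto intro!: derivative_eq_intros)
  have dv: "(vf has_real_derivative - sin x / 2) (at x)" for x
    unfolding vf_def by (auto intro!: derivative_eq_intros)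
  have dF: "(F has_real_derivative G x) (at x)" for x
  proof -
    have "(F has_real_derivative
        (real a * wq x ^ (a - 1) * (sin x / 2)) * vf x ^ b * sin x
        + wq x ^ a * (real b * vf x ^ (b - 1) * (- sin x / 2)) * sin x
        + wq x ^ a * vf x ^ b * cos x) (at x)"
      unfolding F_def
      by (auto intro!: derivative_eq_intros dw dv simp: algebra_simps)
    moreover have "(real a * wq x ^ (a - 1) * (sin x / 2)) * vf x ^ b * sin x
        + wq x ^ a * (real b * vf x ^ (b - 1) * (- sin x / 2)) * sin x
        + wq x ^ a * vf x ^ b * cos x = G x"
    proof -
      have s2: "sin x * sin x = 4 * wq x * vf x" using sin_sq_wv[of x] by (simp add: power2_eq_square)
      have c: "cos x = vf x - wq x" unfolding wq_def vf_def by (simp add: field_simps)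
      have A: "real a * wq x ^ (a - 1) * wq x = real a * wq x ^ a" by (cases a) auto
      have B: "real b * vf x ^ (b - 1) * vf x = real b * vf x ^ b" by (cases b) auto
      have "(real a * wq x ^ (a - 1) * (sin x / 2)) * vf x ^ b * sin x
        + wq x ^ a * (real b * vf x ^ (b - 1) * (- sin x / 2)) * sin x
        + wq x ^ a * vf x ^ b * cos x
        = real a * wq x ^ (a - 1) * vf x ^ b * (sin x * sin x) / 2
          - real b * wq x ^ a * vf x ^ (b - 1) * (sin x * sin x) / 2
          + wq x ^ a * vf x ^ b * cos x"
        by (rule alg1)
      also have "\<dots> = real a * wq x ^ (a - 1) * vf x ^ b * (4 * wq x * vf x) / 2
          - real b * wq x ^ a * vf x ^ (b - 1) * (4 * wq x * vf x) / 2
          + wq x ^ a * vf x ^ b * (vf x - wq x)"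
        by (simp only: s2 c)
      also have "\<dots> = 2 * vf x * vf x ^ b * (real a * wq x ^ (a - 1) * wq x)
          - 2 * wq x * wq x ^ a * (real b * vf x ^ (b - 1) * vf x)
          + wq x ^ a * vf x ^ b * (vf x - wq x)"
        by (rule alg2)
      also have "\<dots> = G x" unfolding A B G_def by (simp add: algebra_simps)
      finally show ?thesis .
    qed
    ultimately show ?thesis by simp
  qed
  have "(G has_integral F pi - F 0) {0..pi}"
  proof (rule fundamental_theorem_of_calculus)
    show "0 \<le> pi" by simp
    fix x assume "x \<in> {0..pi}"
    have "(F has_real_derivative G x) (at x within {0..pi})"
      by (rule has_field_derivative_at_within[OF dF])
    then show "(F has_vector_derivative G x) (at x within {0..pi})"
      by (simp add: has_real_derivative_iff_has_vector_derivative)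
  qed
  then have G0: "(G has_integral 0) {0..pi}" by (simp add: F_def)
  have i1: "(\<lambda>x. wq x ^ a * vf x ^ Suc b) integrable_on {0..pi}"
    by (intro integrable_continuous_interval cont_wv)
  have i2: "(\<lambda>x. wq x ^ Suc a * vf x ^ b) integrable_on {0..pi}"
    by (intro integrable_continuous_interval cont_wv)
  have "(G has_integral (2 * real a + 1) * Kint a (Suc b) - (2 * real b + 1) * Kint (Suc a) b) {0..pi}"
    unfolding G_def Kint_def
    by (intro has_integral_diff has_integral_mult_right integrable_integral i1 i2)
  from has_integral_unique[OF G0 this] show ?thesis by simp
qed



lemma Kint_chain: "Kint (s+2) (t+2) * pochhammer (real t + 5/2) s = Kint 2 (s+t+2) * pochhammer (5/2) s"
proof (induction s arbitrary: t)
  case 0 then show ?case by (simp add: eval_nat_numeral)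
next
  case (Suc s t)
  have r: "(2 * real (s+2) + 1) * Kint (s+2) (Suc (t+2)) = (2 * real (t+2) + 1) * Kint (Suc (s+2)) (t+2)"
    by (rule Kint_rec)
  have IH: "Kint (s+2) ((t+1)+2) * pochhammer (real (t+1) + 5/2) s = Kint 2 (s+(t+1)+2) * pochhammer (5/2) s"
    by (rule Suc.IH)
  have p1: "pochhammer (real t + 5/2) (Suc s) = (real t + 5/2) * pochhammer (real t + 7/2) s"
    by (simp add: pochhammer_rec add.assoc)
  have p2: "pochhammer (5/2::real) (Suc s) = pochhammer (5/2) s * (5/2 + real s)"
    by (simp add: pochhammer_Suc)
  have e: "real (t+1) + 5/2 = real t + 7/2" by simp
  have "Kint (Suc s + 2) (t + 2) * pochhammer (real t + 5/2) (Suc s)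
      = ((2 * real (t+2) + 1) * Kint (Suc (s+2)) (t+2)) * pochhammer (real t + 7/2) s / 2"
    by (simp add: p1 algebra_simps)
  also have "\<dots> = (2 * real (s+2) + 1) * Kint (s+2) (Suc (t+2)) * pochhammer (real t + 7/2) s / 2"
    by (simp only: r)
  also have "\<dots> = (real s + 5/2) * (Kint (s+2) ((t+1)+2) * pochhammer (real (t+1) + 5/2) s)"
    by (simp add: e algebra_simps)
  also have "\<dots> = Kint 2 (Suc s + t + 2) * pochhammer (5/2) (Suc s)"
    by (simp only: IH p2) (simp add: algebra_simps)
  finally show ?case .
qed

lemma term_id:
  fixes s d k :: nat
  shows "((real (s+d) + 3/2) gchoose d) * ((real (s+d) + 3/2) gchoose s) * Kint (s+2) (d+k+2)
           * pochhammer (real (s+d) + 5/2) k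
       = pochhammer (5/2) (s+d) * Kint 2 (s+d+k+2) / (fact s * fact d) * pochhammer (real d + 5/2) k"
proof -
  have g1: "(real (s+d) + 3/2) gchoose d = pochhammer (real s + 5/2) d / fact d"
    by (simp add: gbinomial_pochhammer' algebra_simps)
  have g2: "(real (s+d) + 3/2) gchoose s = pochhammer (real d + 5/2) s / fact s"
    by (simp add: gbinomial_pochhammer' algebra_simps)
  have q1: "pochhammer (real d + 5/2) s * pochhammer (real (s+d) + 5/2) k
          = pochhammer (real d + 5/2) k * pochhammer (real (d+k) + 5/2) s"
  proof -
    have "pochhammer (real d + 5/2) s * pochhammer (real (s+d) + 5/2) k = pochhammer (real d + 5/2) (s+k)"
      using pochhammer_product'[of "real d + 5/2" s k] by (simp add: algebra_simps)
    also have "\<dots> = pochhammer (real d + 5/2) (k+s)" by (simp add: add.commute)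
    also have "\<dots> = pochhammer (real d + 5/2) k * pochhammer (real (d+k) + 5/2) s"
      using pochhammer_product'[of "real d + 5/2" k s] by (simp add: algebra_simps)
    finally show ?thesis .
  qed
  have ch: "Kint (s+2) ((d+k)+2) * pochhammer (real (d+k) + 5/2) s = Kint 2 (s+(d+k)+2) * pochhammer (5/2) s"
    by (rule Kint_chain)
  have q2: "pochhammer (5/2::real) s * pochhammer (real s + 5/2) d = pochhammer (5/2) (s+d)"
    using pochhammer_product'[of "5/2::real" s d] by (simp add: algebra_simps)
  have "((real (s+d) + 3/2) gchoose d) * ((real (s+d) + 3/2) gchoose s) * Kint (s+2) (d+k+2)
           * pochhammer (real (s+d) + 5/2) k
      = pochhammer (real s + 5/2) d / fact d / fact s * Kint (s+2) (d+k+2)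
         * (pochhammer (real d + 5/2) s * pochhammer (real (s+d) + 5/2) k)"
    unfolding g1 g2 by (simp add: field_simps)
  also have "\<dots> = pochhammer (real s + 5/2) d / fact d / fact s * pochhammer (real d + 5/2) k
         * (Kint (s+2) ((d+k)+2) * pochhammer (real (d+k) + 5/2) s)"
    by (simp only: q1) (simp add: algebra_simps)
  also have "\<dots> = pochhammer (real s + 5/2) d / fact d / fact s * pochhammer (real d + 5/2) k
         * (Kint 2 (s+(d+k)+2) * pochhammer (5/2) s)"
    by (simp only: ch)
  also have "\<dots> = (pochhammer (5/2) s * pochhammer (real s + 5/2) d) * Kint 2 (s+d+k+2) / (fact s * fact d) * pochhammer (real d + 5/2) k"
    by (simp add: algebra_simps)
  also have "\<dots> = pochhammer (5/2) (s+d) * Kint 2 (s+d+k+2) / (fact s * fact d) * pochhammer (real d + 5/2) k"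
    by (simp only: q2)
  finally show ?thesis .
qed



lemma poch_poly:
  "\<exists>p::real poly. degree p \<le> k \<and> (\<forall>x. poly p x = pochhammer (c - x) k)"
proof -
  define p where "p = (\<Prod>i\<in>{0..<k}. [:c + real i, -1:])"
  have "degree p \<le> (\<Sum>i\<in>{0..<k}. degree [:c + real i, -1::real:])"
    unfolding p_def using degree_prod_sum_le[of "{0..<k}" "\<lambda>i. [:c + real i, -1::real:]"] by (simp add: o_def)
  also have "\<dots> = k" by simp
  finally have "degree p \<le> k" .
  moreover have "poly p x = pochhammer (c - x) k" for x
    unfolding p_def pochhammer_prod poly_prod by (intro prod.cong) auto
  ultimately show ?thesis by blast
qed

lemma sum_zero:
  assumes "k < n"
  shows "(\<Sum>s\<le>n. ((real n + 3/2) gchoose (n-s)) * ((real n + 3/2) gchoose s) * (-1)^s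
            * Kint (s+2) (n-s+k+2)) = 0"
proof -
  define P where "P = pochhammer (real n + 5/2) k"
  have P0: "P \<noteq> 0" unfolding P_def using pochhammer_pos[of "real n + 5/2" k] by simp
  define Cst where "Cst = pochhammer (5/2) n * Kint 2 (n+k+2) / fact n"
  obtain p where dp: "degree p \<le> k" and pp: "\<And>x. poly p x = pochhammer (real n + 5/2 - x) k"
    using poch_poly by blast
  have t: "((real n + 3/2) gchoose (n-s)) * ((real n + 3/2) gchoose s) * (-1)^s
            * Kint (s+2) (n-s+k+2) * P
         = Cst * ((-1)^s * real (n choose s) * poly p (real s))" if s: "s \<le> n" for s
  proof -
    define d where "d = n - s"
    have nd: "n = s + d" using s d_def by simp
    have ti: "((real (s+d) + 3/2) gchoose d) * ((real (s+d) + 3/2) gchoose s) * Kint (s+2) (d+k+2)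
           * pochhammer (real (s+d) + 5/2) k
       = pochhammer (5/2) (s+d) * Kint 2 (s+d+k+2) / (fact s * fact d) * pochhammer (real d + 5/2) k"
      by (rule term_id)
    have bc: "real (n choose s) = fact n / (fact s * fact d)"
      using binomial_fact[OF s] d_def by simp
    have pe: "poly p (real s) = pochhammer (real d + 5/2) k"
      using pp nd by (simp add: algebra_simps)
    show ?thesis
      unfolding Cst_def P_def bc pe using ti unfolding nd[symmetric] d_def[symmetric]
      by (simp add: field_simps)
  qed
  have "(\<Sum>s\<le>n. ((real n + 3/2) gchoose (n-s)) * ((real n + 3/2) gchoose s) * (-1)^s
            * Kint (s+2) (n-s+k+2)) * P
      = (\<Sum>s\<le>n. Cst * ((-1)^s * real (n choose s) * poly p (real s)))"
    unfolding sum_distrib_right by (intro sum.cong refl t) simp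
  also have "\<dots> = Cst * (\<Sum>s\<le>n. (-1)^s * real (n choose s) * poly p (real s))"
    by (simp add: sum_distrib_left)
  also have "\<dots> = 0" using fin_diff_poly[of p n] dp assms by simp
  finally show ?thesis using P0 by simp
qed



definition JP :: "nat \<Rightarrow> real \<Rightarrow> real \<Rightarrow> real poly" where
  "JP n a b = (\<Sum>s\<le>n. smult (((real n + a) gchoose (n - s)) * ((real n + b) gchoose s))
       ([:-1/2, 1/2:] ^ s * [:1/2, 1/2:] ^ (n - s)))"

lemma poly_JP: "poly (JP n a b) x = jacobiP n a b x"
  unfolding JP_def jacobiP_def poly_sum
  by (intro sum.cong refl) (simp add: poly_power field_simps)

lemma degree_JP: "degree (JP n a b) \<le> n"
  unfolding JP_def
proof (intro degree_sum_le)
  fix s assume s: "s \<in> {..n}"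
  have "degree ([:-1/2, 1/2::real:] ^ s * [:1/2, 1/2:] ^ (n - s)) \<le> degree ([:-1/2, 1/2::real:] ^ s) + degree ([:1/2, 1/2::real:] ^ (n - s))"
    by (rule degree_mult_le)
  also have "\<dots> \<le> s + (n - s)"
    by (intro add_mono order.trans[OF degree_power_le]) auto
  finally show "degree (smult (((real n + a) gchoose (n - s)) * ((real n + b) gchoose s))
       ([:-1/2, 1/2:] ^ s * [:1/2, 1/2:] ^ (n - s))) \<le> n"
    using s by (intro order.trans[OF degree_smult_le]) auto
qed simp

lemma cont_wq: "continuous_on S wq"
  unfolding wq_def by (intro continuous_intros) auto
lemma cont_vf: "continuous_on S vf"
  unfolding vf_def by (intro continuous_intros) auto

lemma cont_jac: "continuous_on S (\<lambda>x. jacobiP n a b (cos x))"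
  unfolding jacobiP_def by (intro continuous_intros) auto

lemma orth_v:
  assumes "k < n"
  shows "integral {0..pi} (\<lambda>x. jacobiP n (3/2) (3/2) (cos x) * vf x ^ k * sin x ^ 4) = 0"
proof -
  define c where "c s = ((real n + 3/2) gchoose (n-s)) * ((real n + 3/2) gchoose s) * (-1)^s" for s
  have pw: "jacobiP n (3/2) (3/2) (cos x) * vf x ^ k * sin x ^ 4
      = (\<Sum>s\<le>n. 16 * c s * (wq x ^ (s+2) * vf x ^ (n-s+k+2)))" for x
  proof -
    have "sin x ^ 4 = (sin x ^ 2) ^ 2" by (simp flip: power_mult)
    also have "\<dots> = (4 * wq x * vf x) ^ 2" by (simp only: sin_sq_wv)
    also have "\<dots> = 16 * wq x ^ 2 * vf x ^ 2" by (simp add: power_mult_distrib)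
    finally have s4: "sin x ^ 4 = 16 * wq x ^ 2 * vf x ^ 2" .
    have u: "(cos x - 1) / 2 = - wq x" and v: "(cos x + 1) / 2 = vf x"
      unfolding wq_def vf_def by (simp_all add: field_simps)
    have "jacobiP n (3/2) (3/2) (cos x) * vf x ^ k * sin x ^ 4
        = (\<Sum>s\<le>n. ((real n + 3/2) gchoose (n-s)) * ((real n + 3/2) gchoose s) * (- wq x) ^ s * vf x ^ (n-s))
          * vf x ^ k * (16 * wq x ^ 2 * vf x ^ 2)"
      unfolding jacobiP_def u v s4 ..
    also have "\<dots> = (\<Sum>s\<le>n. 16 * c s * (wq x ^ (s+2) * vf x ^ (n-s+k+2)))"
      unfolding sum_distrib_right c_def
    proof (intro sum.cong refl)
      fix s assume "s \<in> {..n}"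
      have p1: "(- wq x) ^ s = (-1)^s * wq x ^ s" by (rule power_minus)
      have p2: "wq x ^ (s+2) = wq x ^ s * wq x ^ 2" by (rule power_add)
      have p3: "vf x ^ (n-s+k+2) = vf x ^ (n-s) * vf x ^ k * vf x ^ 2" by (simp only: power_add)
      show "((real n + 3/2) gchoose (n-s)) * ((real n + 3/2) gchoose s) * (- wq x) ^ s * vf x ^ (n-s)
          * vf x ^ k * (16 * wq x ^ 2 * vf x ^ 2)
          = 16 * (((real n + 3/2) gchoose (n-s)) * ((real n + 3/2) gchoose s) * (-1)^s) * (wq x ^ (s+2) * vf x ^ (n-s+k+2))"
        unfolding p1 p2 p3 by (simp only: mult_ac)
    qed
    finally show ?thesis .
  qed
  have "integral {0..pi} (\<lambda>x. jacobiP n (3/2) (3/2) (cos x) * vf x ^ k * sin x ^ 4)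
      = integral {0..pi} (\<lambda>x. \<Sum>s\<le>n. 16 * c s * (wq x ^ (s+2) * vf x ^ (n-s+k+2)))"
    by (simp only: pw)
  also have "\<dots> = (\<Sum>s\<le>n. integral {0..pi} (\<lambda>x. 16 * c s * (wq x ^ (s+2) * vf x ^ (n-s+k+2))))"
    by (intro integral_sum) (auto intro!: integrable_continuous_interval continuous_intros cont_wq cont_vf)
  also have "\<dots> = (\<Sum>s\<le>n. 16 * (c s * Kint (s+2) (n-s+k+2)))"
    unfolding Kint_def by (simp add: integral_mult_right mult.assoc)
  also have "\<dots> = 16 * (\<Sum>s\<le>n. c s * Kint (s+2) (n-s+k+2))"
    by (simp add: sum_distrib_left)
  also have "\<dots> = 0" using sum_zero[OF assms] unfolding c_def by simp
  finally show ?thesis .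
qed



lemma orth_poly:
  assumes "degree q < n"
  shows "integral {0..pi} (\<lambda>x. jacobiP n (3/2) (3/2) (cos x) * poly q (cos x) * sin x ^ 4) = 0"
proof -
  define r where "r = pcompose q [:-1, 2:]"
  have dr: "degree r < n" using assms by (simp add: r_def degree_pcompose)
  have pr: "poly q (cos x) = (\<Sum>i\<le>degree r. coeff r i * vf x ^ i)" for x
  proof -
    have "poly [:-1, 2:] (vf x) = cos x" unfolding vf_def by (simp add: field_simps)
    then have "poly q (cos x) = poly r (vf x)" unfolding r_def poly_pcompose by simp
    then show ?thesis by (simp add: poly_altdef)
  qed
  have "integral {0..pi} (\<lambda>x. jacobiP n (3/2) (3/2) (cos x) * poly q (cos x) * sin x ^ 4)
      = integral {0..pi} (\<lambda>x. \<Sum>i\<le>degree r. coeff r i * (jacobiP n (3/2) (3/2) (cos x) * vf x ^ i * sin x ^ 4))"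
    unfolding pr sum_distrib_left sum_distrib_right by (simp add: mult_ac)
  also have "\<dots> = (\<Sum>i\<le>degree r. integral {0..pi} (\<lambda>x. coeff r i * (jacobiP n (3/2) (3/2) (cos x) * vf x ^ i * sin x ^ 4)))"
    by (intro integral_sum) (auto intro!: integrable_continuous_interval continuous_intros cont_vf cont_jac)
  also have "\<dots> = (\<Sum>i\<le>degree r. coeff r i * integral {0..pi} (\<lambda>x. jacobiP n (3/2) (3/2) (cos x) * vf x ^ i * sin x ^ 4))"
    by (simp add: integral_mult_right)
  also have "\<dots> = 0"
    using dr by (intro sum.neutral ballI) (simp add: orth_v)
  finally show ?thesis .
qed

definition EP :: "nat \<Rightarrow> real poly" where "EP n = smult (normN n) (JP n (3/2) (3/2))"

lemma ee_EP: "ee n x = poly (EP n) (cos x)"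
  by (simp add: EP_def ee_def poly_JP)

lemma degree_EP: "degree (EP n) \<le> n"
  unfolding EP_def using degree_JP[of n] degree_smult_le order.trans by blast

lemma degree_mult2: "degree (EP a * EP b) \<le> a + b"
  using degree_mult_le[of "EP a" "EP b"] degree_EP[of a] degree_EP[of b] by linarith

lemma degree_mult3: "degree (EP a * EP b * EP c * [:1,0,-1:]) \<le> a + b + c + 2"
proof -
  have "degree (EP a * EP b * EP c * [:1,0,-1:]) \<le> degree (EP a * EP b * EP c) + degree [:1,0,-1::real:]"
    by (rule degree_mult_le)
  moreover have "degree (EP a * EP b * EP c) \<le> degree (EP a * EP b) + degree (EP c)"
    by (rule degree_mult_le)
  ultimately show ?thesis using degree_mult2[of a b] degree_EP[of c] by simp
qed

lemma orth_gen:
  assumes "degree Q < n" and "\<And>x. f x = poly (EP n) (cos x) * poly Q (cos x) * sin x ^ 4"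
  shows "integral {0..pi} f = 0"
proof -
  have "f = (\<lambda>x. normN n * (jacobiP n (3/2) (3/2) (cos x) * poly Q (cos x) * sin x ^ 4))"
    using assms(2) by (simp add: EP_def poly_JP mult_ac fun_eq_iff)
  then show ?thesis using orth_poly[OF assms(1)] by simp
qed

lemma sin6: "sin (x::real) ^ 6 = sin x ^ 4 * poly [:1,0,-1:] (cos x)"
proof -
  have a: "sin x ^ 6 = sin x ^ 4 * sin x ^ 2" by (simp flip: power_add)
  have b: "sin x ^ 2 = poly [:1,0,-1:] (cos x)" using sin_squared_eq[of x] by (simp add: power2_eq_square)
  show ?thesis unfolding a b ..
qed

theorem lemma5p7:
  fixes i j k m :: nat
  shows "(omega i + omega j - omega m = 0 \<or> omega i - omega j + omega m = 0 \<or>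
            - omega i + omega j + omega m = 0 \<longrightarrow> Cbar i j m = 0)
       \<and> (omega i + omega j + omega k - omega m = 0 \<or> omega i + omega j - omega k + omega m = 0 \<or>
            omega i - omega j + omega k + omega m = 0 \<or> - omega i + omega j + omega k + omega m = 0
            \<longrightarrow> C4 i j k m = 0)"
proof (intro conjI impI)
  assume "omega i + omega j - omega m = 0 \<or> omega i - omega j + omega m = 0 \<or>
            - omega i + omega j + omega m = 0"
  then consider "m = i + j + 2" | "j = i + m + 2" | "i = j + m + 2"
    unfolding omega_def by linarith
  then show "Cbar i j m = 0"
  proof cases
    case 1 show ?thesis unfolding Cbar_def
      by (rule orth_gen[where n = m and Q = "EP i * EP j"])
         (use degree_mult2[of i j] 1 in \<open>simp_all add: ee_EP mult_ac\<close>)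
  next
    case 2 show ?thesis unfolding Cbar_def
      by (rule orth_gen[where n = j and Q = "EP i * EP m"])
         (use degree_mult2[of i m] 2 in \<open>simp_all add: ee_EP mult_ac\<close>)
  next
    case 3 show ?thesis unfolding Cbar_def
      by (rule orth_gen[where n = i and Q = "EP j * EP m"])
         (use degree_mult2[of j m] 3 in \<open>simp_all add: ee_EP mult_ac\<close>)
  qed
next
  assume "omega i + omega j + omega k - omega m = 0 \<or> omega i + omega j - omega k + omega m = 0 \<or>
            omega i - omega j + omega k + omega m = 0 \<or> - omega i + omega j + omega k + omega m = 0"
  then consider "m = i + j + k + 4" | "k = i + j + m + 4" | "j = i + k + m + 4" | "i = j + k + m + 4"
    unfolding omega_def by linarith
  then show "C4 i j k m = 0"
  proof cases
    case 1 show ?thesis unfolding C4_def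
      by (rule orth_gen[where n = m and Q = "EP i * EP j * EP k * [:1,0,-1:]"])
         (use degree_mult3[of i j k] 1 in \<open>simp_all only: ee_EP sin6 poly_mult mult_ac\<close>)
  next
    case 2 show ?thesis unfolding C4_def
      by (rule orth_gen[where n = k and Q = "EP i * EP j * EP m * [:1,0,-1:]"])
         (use degree_mult3[of i j m] 2 in \<open>simp_all only: ee_EP sin6 poly_mult mult_ac\<close>)
  next
    case 3 show ?thesis unfolding C4_def
      by (rule orth_gen[where n = j and Q = "EP i * EP k * EP m * [:1,0,-1:]"])
         (use degree_mult3[of i k m] 3 in \<open>simp_all only: ee_EP sin6 poly_mult mult_ac\<close>)
  next
    case 4 show ?thesis unfolding C4_def
      by (rule orth_gen[where n = i and Q = "EP j * EP k * EP m * [:1,0,-1:]"])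
         (use degree_mult3[of j k m] 4 in \<open>simp_all only: ee_EP sin6 poly_mult mult_ac\<close>)
  qed
qed

end
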